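(* Let $p,n\in\mathbb{N}$ with $p,n\ge1$, $r\in\mathbb{N}$ with $r\le p$, and assume $n\ge\max\{p+1,\;p+\lfloor p/2\rfloor\}$. Then $$X^{p,r,2}=\Big(\frac{2n+1}{2}\Big)^{2r-1}\big(T_n^{\bm\alpha}+H_n^{\bm\alpha,2,1}\big),$$ where $\alpha_k=(-1)^r\mathcal{N}_{2p+1}^{(2r)}(p+1-k)$, $k=0,\dots,p$.
   Context: Cardinal B-spline: $\mathcal{N}_0(t)=1$ for $t\in[0,1)$, $0$ otherwise; $\mathcal{N}_p(t)=\frac{t}{p}\mathcal{N}_{p-1}(t)+\frac{p+1-t}{p}\mathcal{N}_{p-1}(t-1)$, $p\ge1$ (support $[0,p+1]$, $C^{p-1}$). Mixed basis: for $c\in\mathbb{R}$ put $D_c(x)=\mathcal{N}_p\big(\tfrac{2n+1}{2}x-c+\tfrac{p+1}{2}\big)$ (B-spline centred at $2c/(2n+1)$), and for $i=1,\dots,n$, $x\in[0,1]$, $$N^p_{i,2}(x)=\sum_{m\in\mathbb{Z}}(-1)^m\Big(D_{i+m(2n+1)}(x)-D_{-i+m(2n+1)}(x)\Big).$$ These form a basis of the $C^{p-1}$ splines of degree $p$ with breakpoints $2k/(2n+1)$ ($p$ odd) or $(2k+1)/(2n+1)$ ($p$ even) whose even-order derivatives ($\le p$) vanish at $0$ and odd-order derivatives ($\le p$) vanish at $1$. $X^{p,r,2}_{i,j}=\int_0^1(N^p_{i,2})^{(r)}(N^p_{j,2})^{(r)}\,\mathrm{d}x$. With $\alpha_k=0$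 for $k>p$: $(T_n^{\bm\alpha})_{i,j}=\alpha_{|i-j|}$ and $(H_n^{\bm\alpha,2,1})_{i,j}=-\alpha_{i+j}+\alpha_{2n+1-i-j}$. *)

theory Defs
  imports "HOL-Analysis.Analysis"
begin

fun cardinal_bspline :: "nat \<Rightarrow> real \<Rightarrow> real" where
  "cardinal_bspline 0 t = (if 0 \<le> t \<and> t < 1 then 1 else 0)"
| "cardinal_bspline (Suc p) t =
     t / real (Suc p) * cardinal_bspline p t
     + (real (Suc p) + 1 - t) / real (Suc p) * cardinal_bspline p (t - 1)"

definition bspline_D :: "nat \<Rightarrow> nat \<Rightarrow> real \<Rightarrow> real \<Rightarrow> real" where
  "bspline_D p n c x =
     cardinal_bspline p ((2 * real n + 1) / 2 * x - c + (real p + 1) / 2)"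

text \<open>Mixed-boundary basis function N^p_{i,2} (defined on all reals; used on [0,1]).
  The sum over m in Z is an (in fact locally finite) infinite sum.\<close>
definition mixed_basis :: "nat \<Rightarrow> nat \<Rightarrow> nat \<Rightarrow> real \<Rightarrow> real" where
  "mixed_basis p n i x =
     (\<Sum>\<^sub>\<infinity>m::int. (-1::real) ^ nat \<bar>m\<bar> *
        (bspline_D p n (real i + real_of_int m * (2 * real n + 1)) x
         - bspline_D p n (- real i + real_of_int m * (2 * real n + 1)) x))"

definition nth_deriv :: "nat \<Rightarrow> (real \<Rightarrow> real) \<Rightarrow> real \<Rightarrow> real" where
  "nth_deriv r f = (deriv ^^ r) f"

definition X_mat :: "nat \<Rightarrow> nat \<Rightarrow> nat \<Rightarrow> nat \<Rightarrow> nat \<Rightarrow> real" where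
  "X_mat p r n i j =
     integral {0..1} (\<lambda>x. nth_deriv r (mixed_basis p n i) x * nth_deriv r (mixed_basis p n j) x)"

definition alpha_coef :: "nat \<Rightarrow> nat \<Rightarrow> nat \<Rightarrow> real" where
  "alpha_coef p r k =
     (if k \<le> p then (-1) ^ r * nth_deriv (2 * r) (cardinal_bspline (2 * p + 1)) (real p + 1 - real k)
      else 0)"

definition toeplitz_T :: "(nat \<Rightarrow> real) \<Rightarrow> nat \<Rightarrow> nat \<Rightarrow> real" where
  "toeplitz_T \<alpha> i j = \<alpha> (if i \<le> j then j - i else i - j)"

definition hankel_H :: "(nat \<Rightarrow> real) \<Rightarrow> nat \<Rightarrow> nat \<Rightarrow> nat \<Rightarrow> real" where
  "hankel_H \<alpha> n i j = - \<alpha> (i + j) + \<alpha> (2 * n + 1 - i - j)"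

end

theory Submission
  imports Defs
begin


fun Mb :: "nat \<Rightarrow> real \<Rightarrow> real" where
  "Mb 0 t = (if 0 < t \<and> t < 1 then 1 else if t = 0 \<or> t = 1 then 1/2 else 0)"
| "Mb (Suc q) t = t / real (Suc q) * Mb q t + (real (Suc q) + 1 - t) / real (Suc q) * Mb q (t - 1)"

lemma Mb1: "Mb 1 t = max 0 (1 - \<bar>t - 1\<bar>)"
  by (auto simp: max_def abs_if)

lemma N1: "cardinal_bspline 1 t = max 0 (1 - \<bar>t - 1\<bar>)"
  by (auto simp: max_def abs_if)

lemma Mb_N: "q \<ge> 1 \<Longrightarrow> cardinal_bspline q = Mb q"
proof (induction q rule: nat_induct_at_least)
  case base
  show ?case by (rule ext) (simp only: Mb1 N1)
next
  case (Suc q)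
  show ?case by (rule ext) (simp only: cardinal_bspline.simps Mb.simps Suc.IH)
qed

lemma Mb_supp: "t < 0 \<or> t > real q + 1 \<Longrightarrow> Mb q t = 0"
  by (induction q arbitrary: t) auto

lemma Mb_supp1: "q \<ge> 1 \<Longrightarrow> t \<le> 0 \<or> t \<ge> real q + 1 \<Longrightarrow> Mb q t = 0"
proof (induction q arbitrary: t rule: nat_induct_at_least)
  case base
  then show ?case by (auto simp: Mb1)
next
  case (Suc q)
  then show ?case by auto
qed

lemma Mb_nonneg: "0 \<le> Mb q t"
proof (induction q arbitrary: t)
  case 0 then show ?case by simp
next
  case (Suc q)
  have a: "0 \<le> t / real (Suc q) * Mb q t"
  proof (cases "t < 0")
    case True then show ?thesis using Mb_supp[of t q] by simp
  next
    case False then show ?thesis using Suc.IH[of t] by simp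
  qed
  have b: "0 \<le> (real (Suc q) + 1 - t) / real (Suc q) * Mb q (t - 1)"
  proof (cases "t - 1 > real q + 1")
    case True then show ?thesis using Mb_supp[of "t - 1" q] by simp
  next
    case False then show ?thesis using Suc.IH[of "t-1"] by simp
  qed
  show ?case using a b by simp
qed

lemma Mb_bound: "Mb q t \<le> 4 ^ q"
proof (induction q arbitrary: t)
  case 0 then show ?case by simp
next
  case (Suc q)
  have a: "t / real (Suc q) * Mb q t \<le> 2 * 4 ^ q"
  proof (cases "t < 0 \<or> t > real q + 1")
    case True then show ?thesis using Mb_supp[of t q] by simp
  next
    case False
    then have "t / real (Suc q) \<le> 2" "0 \<le> t / real (Suc q)" by (auto simp: field_simps)
    then show ?thesis using Suc.IH[of t] Mb_nonneg[of q t]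
      by (metis mult_mono zero_le_numeral zero_le_power)
  qed
  have b: "(real (Suc q) + 1 - t) / real (Suc q) * Mb q (t - 1) \<le> 2 * 4 ^ q"
  proof (cases "t - 1 < 0 \<or> t - 1 > real q + 1")
    case True then show ?thesis using Mb_supp[of "t-1" q] by auto
  next
    case False
    then have "(real (Suc q) + 1 - t) / real (Suc q) \<le> 2" "0 \<le> (real (Suc q) + 1 - t) / real (Suc q)"
      by (auto simp: field_simps)
    then show ?thesis using Suc.IH[of "t-1"] Mb_nonneg[of q "t-1"]
      by (metis mult_mono zero_le_numeral zero_le_power)
  qed
  show ?case using a b by simp
qed

lemma Mb_sym: "Mb q (real q + 1 - t) = Mb q t"
proof (induction q arbitrary: t)
  case 0 then show ?case by auto
next
  case (Suc q)
  have e1: "Mb q (real (Suc q) + 1 - t) = Mb q (t - 1)"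
    using Suc.IH[of "t - 1"] by (simp add: algebra_simps)
  have e2: "Mb q (real (Suc q) + 1 - t - 1) = Mb q t"
    using Suc.IH[of t] by (simp add: algebra_simps)
  show ?case by (simp only: Mb.simps e1 e2) (simp add: algebra_simps)
qed

lemma Mb_meas[measurable]: "Mb q \<in> borel_measurable borel"
  by (induction q) (simp_all, measurable)


lemma bm_integrable:
  fixes f :: "real \<Rightarrow> real"
  assumes "f \<in> borel_measurable borel" "\<And>x. \<bar>f x\<bar> \<le> B"
  shows "f integrable_on {a..b}"
proof -
  have "f absolutely_integrable_on {a..b}"
  proof (rule measurable_bounded_by_integrable_imp_absolutely_integrable[where g="\<lambda>_. B"])
    show "f \<in> borel_measurable (lebesgue_on {a..b})"
      using assms(1) by (intro measurable_restrict_space1 measurable_completion) simp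
    show "{a..b} \<in> sets lebesgue" by simp
    show "(\<lambda>_. B) integrable_on {a..b}" by (rule integrable_on_const) simp
    show "norm (f x) \<le> B" for x using assms(2) by simp
  qed
  then show ?thesis using absolutely_integrable_on_def by blast
qed

lemma Mb_abs_bound: "\<bar>Mb q t\<bar> \<le> 4 ^ q"
  using Mb_bound[of q t] Mb_nonneg[of q t] by simp

lemma Mb_integrable: "Mb q integrable_on {a..b}"
  by (rule bm_integrable[OF Mb_meas Mb_abs_bound])

lemma nonint_minus1: "(t::real) \<notin> \<int> \<Longrightarrow> t - 1 \<notin> \<int>"
  by (metis Ints_1 Ints_add diff_add_cancel)

lemma Mb0_deriv:
  assumes "t \<notin> \<int>"
  shows "(Mb 0 has_real_derivative 0) (at t)"
proof -
  have t0: "t \<noteq> 0" "t \<noteq> 1" using assms by auto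
  consider "t < 0" | "0 < t \<and> t < 1" | "t > 1" using t0 by linarith
  then show ?thesis
  proof cases
    case 1
    show ?thesis
      by (rule has_field_derivative_transform_within_open[of "\<lambda>_. 0" 0 t "{..<0}"])
         (use 1 in auto)
  next
    case 2
    show ?thesis
      by (rule has_field_derivative_transform_within_open[of "\<lambda>_. 1" 0 t "{0<..<1}"])
         (use 2 in auto)
  next
    case 3
    show ?thesis
      by (rule has_field_derivative_transform_within_open[of "\<lambda>_. 0" 0 t "{1<..}"])
         (use 3 in auto)
  qed
qed

lemma Mb_deriv_weak:
  assumes "t \<notin> \<int>"
  shows "(Mb (Suc q) has_real_derivative (Mb q t - Mb q (t - 1))) (at t)"
  using assms
proof (induction q arbitrary: t)
  case 0
  have t1: "t - 1 \<notin> \<int>" using nonint_minus1[OF "0.prems"] .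
  have d0: "(Mb 0 has_real_derivative 0) (at t)" using Mb0_deriv[OF "0.prems"] .
  have d1: "((\<lambda>x. Mb 0 (x - 1)) has_real_derivative 0) (at t)"
    using Mb0_deriv[OF t1] DERIV_shift[of "Mb 0" 0 t "-1"] by simp
  have "((\<lambda>t. t / real (Suc 0) * Mb 0 t + (real (Suc 0) + 1 - t) / real (Suc 0) * Mb 0 (t - 1))
     has_real_derivative (1 * Mb 0 t + t * 0 + (-1) * Mb 0 (t - 1) + (2 - t) * 0)) (at t)"
    by (rule derivative_eq_intros d0 d1 refl | simp)+
  then show ?case
    by (simp add: fun_eq_iff[symmetric] Mb.simps[abs_def] del: Mb.simps)
next
  case (Suc q)
  have t1: "t - 1 \<notin> \<int>" using nonint_minus1[OF Suc.prems] .
  have d0: "(Mb (Suc q) has_real_derivative (Mb q t - Mb q (t - 1))) (at t)" using Suc.IH[OF Suc.prems] .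
  have d1: "((\<lambda>x. Mb (Suc q) (x - 1)) has_real_derivative (Mb q (t - 1) - Mb q (t - 1 - 1))) (at t)"
    using Suc.IH[OF t1] DERIV_shift[of "Mb (Suc q)" _ t "-1"] by (simp del: Mb.simps)
  define Q where "Q = real (Suc (Suc q))"
  have Q: "Q \<noteq> 0" by (simp add: Q_def)
  have D0: "((\<lambda>t. t * Mb (Suc q) t + (Q + 1 - t) * Mb (Suc q) (t - 1))
     has_real_derivative (1 * Mb (Suc q) t + t * (Mb q t - Mb q (t - 1))
        + (-1) * Mb (Suc q) (t - 1) + (Q + 1 - t) * (Mb q (t - 1) - Mb q (t - 1 - 1)))) (at t)"
    by (rule derivative_eq_intros d0 d1 refl | simp)+
  have D: "((\<lambda>t. (t * Mb (Suc q) t + (Q + 1 - t) * Mb (Suc q) (t - 1)) / Q)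
     has_real_derivative (1 * Mb (Suc q) t + t * (Mb q t - Mb q (t - 1))
        + (-1) * Mb (Suc q) (t - 1) + (Q + 1 - t) * (Mb q (t - 1) - Mb q (t - 1 - 1))) / Q) (at t)"
    by (rule DERIV_cdivide[OF D0])
  have fe: "Mb (Suc (Suc q)) = (\<lambda>t. (t * Mb (Suc q) t + (Q + 1 - t) * Mb (Suc q) (t - 1)) / Q)"
    by (rule ext) (simp only: Mb.simps(2)[of "Suc q"] Q_def add_divide_distrib times_divide_eq_left)
  have "(1 * Mb (Suc q) t + t * (Mb q t - Mb q (t - 1))
        + (-1) * Mb (Suc q) (t - 1) + (Q + 1 - t) * (Mb q (t - 1) - Mb q (t - 1 - 1))) / Q
      = Mb (Suc q) t - Mb (Suc q) (t - 1)"
  proof -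
    have alg: "\<And>a b c P t :: real. P \<noteq> 0 \<Longrightarrow> P + 1 \<noteq> 0 \<Longrightarrow>
        (1 * (t / P * a + (P + 1 - t) / P * b) + t * (a - b) + (-1) * ((t - 1) / P * b + (P + 1 - (t - 1)) / P * c) + ((P + 1) + 1 - t) * (b - c)) / (P + 1)
         = (t / P * a + (P + 1 - t) / P * b) - ((t - 1) / P * b + (P + 1 - (t - 1)) / P * c)"
      by (simp add: divide_simps) (simp add: algebra_simps)
    have e1: "Mb (Suc q) t = t / (real q + 1) * Mb q t + ((real q + 1) + 1 - t) / (real q + 1) * Mb q (t - 1)"
      by (simp add: add.commute)
    have e2: "Mb (Suc q) (t - 1) = (t - 1) / (real q + 1) * Mb q (t - 1) + ((real q + 1) + 1 - (t - 1)) / (real q + 1) * Mb q (t - 1 - 1)"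
      by (simp add: add.commute)
    have QQ: "Q = (real q + 1) + 1" by (simp add: Q_def)
    show ?thesis unfolding e1 e2 QQ by (rule alg) (simp_all add: add_nonneg_eq_0_iff)
  qed
  then show ?case using D fe by simp
qed

lemma Mb_cont: "isCont (Mb (Suc q)) t"
proof (induction q arbitrary: t)
  case 0
  have "Mb (Suc 0) = (\<lambda>t. max 0 (1 - \<bar>t - 1\<bar>))" by (rule ext) (simp only: One_nat_def[symmetric] Mb1)
  then show ?case by (simp add: continuous_intros)
next
  case (Suc q)
  have fe: "Mb (Suc (Suc q)) = (\<lambda>t. t / real (Suc (Suc q)) * Mb (Suc q) t
       + (real (Suc (Suc q)) + 1 - t) / real (Suc (Suc q)) * Mb (Suc q) (t - 1))"
    by (rule ext) (simp only: Mb.simps(2)[of "Suc q"])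
  have c1: "isCont (\<lambda>t. Mb (Suc q) (t - 1)) t"
    by (rule isCont_o2[OF _ Suc.IH]) (intro continuous_intros)
  show ?case unfolding fe by (intro continuous_intros Suc.IH c1) (smt (verit) of_nat_0_le_iff of_nat_Suc)+
qed

lemma Mb_cont_nonint: "t \<notin> \<int> \<Longrightarrow> isCont (Mb q) t"
proof (cases q)
  case 0
  assume "t \<notin> \<int>"
  then show ?thesis using 0 Mb0_deriv DERIV_isCont by blast
next
  case (Suc q')
  then show ?thesis using Mb_cont by simp
qed

lemma ftc_at:
  fixes f :: "real \<Rightarrow> real"
  assumes "f integrable_on {a..b}" "a < x" "x < b" "isCont f x"
  shows "((\<lambda>u. integral {a..u} f) has_real_derivative f x) (at x)"
proof -
  have "((\<lambda>u. integral {a..u} f) has_vector_derivative f x) (at x within ({a..b} - {}))"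
    by (rule integral_has_vector_derivative_continuous_at)
       (use assms in \<open>auto intro: continuous_at_imp_continuous_at_within\<close>)
  then have "((\<lambda>u. integral {a..u} f) has_vector_derivative f x) (at x)"
    using assms(2,3) by (simp add: at_within_Icc_at)
  then show ?thesis by (simp add: has_real_derivative_iff_has_vector_derivative)
qed


declare Mb.simps(2)[simp del]

lemma integral_zero_on:
  fixes f :: "real \<Rightarrow> real"
  assumes "\<And>x. x \<in> {a..b} \<Longrightarrow> f x = 0"
  shows "integral {a..b} f = 0"
  using assms by (metis integral_0 integral_cong)

lemma Mb_window: "Mb (Suc c) y = integral {y - 1..y} (Mb c)"
proof -
  define I where "I u = integral {-3..u} (Mb c)" for u
  define G where "G y = I y - I (y - 1)" for y
  define S where "S = {-2<..<real c + 4}"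
  have eqG: "integral {y - 1..y} (Mb c) = G y" if "y \<ge> -2" for y
    using Henstock_Kurzweil_Integration.integral_combine[of "-3" "y - 1" y "Mb c"] that Mb_integrable
    by (simp add: G_def I_def algebra_simps)
  have Icont: "continuous_on {-3..real c + 5} I"
    unfolding I_def by (rule indefinite_integral_continuous_1[OF Mb_integrable])
  have Gcont: "continuous_on S G"
  proof -
    have "continuous_on S I" by (rule continuous_on_subset[OF Icont]) (auto simp: S_def)
    moreover have "continuous_on S (\<lambda>y. I (y - 1))"
      by (rule continuous_on_compose2[OF Icont]) (auto simp: S_def intro!: continuous_intros)
    ultimately show ?thesis unfolding G_def by (intro continuous_intros)
  qed
  define H where "H y = Mb (Suc c) y - G y" for y
  have Hcont: "continuous_on S H"
  proof -
    have "continuous_on S (Mb (Suc c))" using Mb_cont by (intro continuous_at_imp_continuous_on) blast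
    then show ?thesis unfolding H_def using Gcont by (intro continuous_intros) (auto simp del: Mb.simps)
  qed
  define K where "K = (of_int ` {-2..int c + 4} :: real set)"
  have finK: "finite K" by (simp add: K_def)
  have Hderiv: "\<forall>y\<in>S - K. DERIV H y :> 0"
  proof
    fix y assume y: "y \<in> S - K"
    have ny: "y \<notin> \<int>"
    proof
      assume "y \<in> \<int>"
      then obtain k where k: "y = of_int k" by (auto elim: Ints_cases)
      then have "k \<in> {-2..int c + 4}" using y by (auto simp: S_def)
      then show False using y k by (auto simp: K_def)
    qed
    have ny1: "y - 1 \<notin> \<int>" using nonint_minus1[OF ny] .
    have yS: "-2 < y" "y < real c + 4" using y by (auto simp: S_def)
    have d1: "(I has_real_derivative Mb c y) (at y)"
      unfolding I_def by (rule ftc_at[OF Mb_integrable, of "-3" y "real c + 5"]) (use yS Mb_cont_nonint[OF ny] in auto)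
    have d2': "(I has_real_derivative Mb c (y - 1)) (at (y - 1))"
      unfolding I_def by (rule ftc_at[OF Mb_integrable, of "-3" "y - 1" "real c + 5"]) (use yS Mb_cont_nonint[OF ny1] in auto)
    have d2: "((\<lambda>x. I (x - 1)) has_real_derivative Mb c (y - 1)) (at y)"
      using d2' DERIV_shift[of I _ y "-1"] by simp
    have d3: "(Mb (Suc c) has_real_derivative (Mb c y - Mb c (y - 1))) (at y)"
      by (rule Mb_deriv_weak[OF ny])
    have "((\<lambda>y. Mb (Suc c) y - (I y - I (y - 1))) has_real_derivative
            (Mb c y - Mb c (y - 1)) - (Mb c y - Mb c (y - 1))) (at y)"
      by (intro derivative_intros d1 d2 d3)
    then show "DERIV H y :> 0" by (simp add: H_def[abs_def] G_def)
  qed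
  obtain c0 where c0: "\<And>y. y \<in> S \<Longrightarrow> H y = c0"
    using DERIV_zero_connected_constant[OF _ _ finK Hcont Hderiv] by (auto simp: S_def)
  have "H (-1) = 0"
  proof -
    have "integral {-1 - 1..-1} (Mb c) = 0"
      by (rule integral_zero_on) (auto intro: Mb_supp)
    then have "G (-1) = 0" using eqG[of "-1"] by simp
    moreover have "Mb (Suc c) (-1) = 0" by (rule Mb_supp) simp
    ultimately show ?thesis by (simp add: H_def)
  qed
  then have H0: "H y = 0" if "y \<in> S" for y
    using c0[OF that] c0[of "-1"] by (simp add: S_def)
  show ?thesis
  proof (cases "y \<in> S")
    case True
    then show ?thesis using H0[OF True] eqG[of y] by (simp add: H_def S_def)
  next
    case False
    then have "y \<le> -2 \<or> y \<ge> real c + 4" by (auto simp: S_def)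
    then have a: "Mb (Suc c) y = 0" by (intro Mb_supp) auto
    have "integral {y - 1..y} (Mb c) = 0"
      by (rule integral_zero_on) (use \<open>y \<le> -2 \<or> y \<ge> real c + 4\<close> in \<open>auto intro!: Mb_supp\<close>)
    then show ?thesis using a by simp
  qed
qed

lemma Mb_deriv: "(Mb (Suc (Suc q)) has_real_derivative (Mb (Suc q) t - Mb (Suc q) (t - 1))) (at t)"
proof -
  define I where "I u = integral {t - 5..u} (Mb (Suc q))" for u
  have d1: "(I has_real_derivative Mb (Suc q) t) (at t)"
    unfolding I_def by (rule ftc_at[OF Mb_integrable, of "t - 5" t "t + 5"]) (use Mb_cont in auto)
  have d2': "(I has_real_derivative Mb (Suc q) (t - 1)) (at (t - 1))"
    unfolding I_def by (rule ftc_at[OF Mb_integrable, of "t - 5" "t - 1" "t + 5"]) (use Mb_cont in auto)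
  have d2: "((\<lambda>x. I (x - 1)) has_real_derivative Mb (Suc q) (t - 1)) (at t)"
    using d2' DERIV_shift[of I _ t "-1"] by simp
  have d: "((\<lambda>y. I y - I (y - 1)) has_real_derivative Mb (Suc q) t - Mb (Suc q) (t - 1)) (at t)"
    by (intro derivative_intros d1 d2)
  show ?thesis
  proof (rule has_field_derivative_transform_within_open[OF d, of "{t - 1<..<t + 1}"])
    fix y :: real assume y: "y \<in> {t - 1<..<t + 1}"
    have "integral {t - 5..y - 1} (Mb (Suc q)) + integral {y - 1..y} (Mb (Suc q)) = integral {t - 5..y} (Mb (Suc q))"
      using Henstock_Kurzweil_Integration.integral_combine[of "t - 5" "y - 1" y "Mb (Suc q)"] y Mb_integrable by auto
    then show "I y - I (y - 1) = Mb (Suc (Suc q)) y"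
      unfolding I_def Mb_window[of "Suc q" y] by simp
  qed auto
qed

lemma Mb_deriv_gen:
  assumes "q \<ge> 1 \<or> t \<notin> \<int>"
  shows "(Mb (Suc q) has_real_derivative (Mb q t - Mb q (t - 1))) (at t)"
proof (cases "t \<notin> \<int>")
  case True then show ?thesis by (rule Mb_deriv_weak)
next
  case False
  then obtain q' where "q = Suc q'" using assms by (cases q) auto
  then show ?thesis using Mb_deriv[of q' t] by simp
qed


lemma Mb0_eq: "x \<notin> {0, 1} \<Longrightarrow> Mb 0 x = (if x \<in> {0..1} then 1 else 0)"
  by auto

lemma window_has: "(Mb c has_integral Mb (Suc c) y) {y - 1..y}"
  using Mb_integrable[of c "y - 1" y] Mb_window[of c y] by (simp add: has_integral_iff)

lemma window_conv1: "((\<lambda>x. Mb a x * Mb 0 (y - x)) has_integral Mb (Suc a) y) UNIV"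
proof -
  have "((\<lambda>x. if x \<in> {y - 1..y} then Mb a x else 0) has_integral Mb (Suc a) y) UNIV"
    by (rule has_integral_restrict_UNIV[THEN iffD2, OF window_has])
  note h = this
  show ?thesis
  proof (rule has_integral_spike_finite[OF _ _ h, of "{y - 1, y}"])
    fix x assume "x \<in> UNIV - {y - 1, y}"
    then have "y - x \<notin> {0, 1}" by auto
    then show "Mb a x * Mb 0 (y - x) = (if x \<in> {y - 1..y} then Mb a x else 0)"
      by (subst Mb0_eq) auto
  qed simp
qed

lemma window_conv2: "((\<lambda>u. Mb 0 u * Mb c (y - u)) has_integral Mb (Suc c) y) UNIV"
proof -
  have "((\<lambda>x. Mb c (x + y)) has_integral Mb (Suc c) y) {y - 1 - y..y - y}"
    by (rule has_integral_shift_real_ivl[OF window_has])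
  then have "((\<lambda>x. Mb c (x + y)) has_integral Mb (Suc c) y) {-1..0}" by simp
  from has_integral_reflect_real[of "\<lambda>x. Mb c (x + y)" "Mb (Suc c) y" 0 "-1", THEN iffD2, OF this]
  have "((\<lambda>u. Mb c (y - u)) has_integral Mb (Suc c) y) {0..1}" by simp
  then have "((\<lambda>u. if u \<in> {0..1} then Mb c (y - u) else 0) has_integral Mb (Suc c) y) UNIV"
    by (rule has_integral_restrict_UNIV[THEN iffD2])
  note h = this
  show ?thesis
  proof (rule has_integral_spike_finite[OF _ _ h, of "{0, 1}"])
    fix x :: real assume "x \<in> UNIV - {0, 1}"
    then show "Mb 0 x * Mb c (y - x) = (if x \<in> {0..1} then Mb c (y - x) else 0)"
      by (subst Mb0_eq) auto
  qed simp
qed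

lemma nn_window2: "(\<integral>\<^sup>+u. ennreal (Mb 0 u * Mb c (y - u)) \<partial>lborel) = ennreal (Mb (Suc c) y)"
  by (rule nn_integral_has_integral_lborel[OF _ _ window_conv2]) (auto intro: mult_nonneg_nonneg Mb_nonneg)

lemma conv_nn: "(\<integral>\<^sup>+x. ennreal (Mb a x * Mb b (y - x)) \<partial>lborel) = ennreal (Mb (Suc (a + b)) y)"
proof (induction b arbitrary: y)
  case 0
  have "integral\<^sup>N lborel (\<lambda>x. ennreal (Mb a x * Mb 0 (y - x))) = ennreal (Mb (Suc a) y)"
    by (rule nn_integral_has_integral_lborel[OF _ _ window_conv1]) (auto intro: mult_nonneg_nonneg Mb_nonneg)
  then show ?case by simp
next
  case (Suc b)
  have "(\<integral>\<^sup>+x. ennreal (Mb a x * Mb (Suc b) (y - x)) \<partial>lborel)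
      = (\<integral>\<^sup>+x. ennreal (Mb a x) * (\<integral>\<^sup>+u. ennreal (Mb 0 u * Mb b (y - x - u)) \<partial>lborel) \<partial>lborel)"
    by (intro nn_integral_cong) (subst nn_window2, subst ennreal_mult', rule Mb_nonneg, rule refl)
  also have "\<dots> = (\<integral>\<^sup>+x. (\<integral>\<^sup>+u. ennreal (Mb a x) * ennreal (Mb 0 u * Mb b (y - x - u)) \<partial>lborel) \<partial>lborel)"
    by (intro nn_integral_cong nn_integral_cmult[symmetric]) measurable
  also have "\<dots> = (\<integral>\<^sup>+u. (\<integral>\<^sup>+x. ennreal (Mb a x) * ennreal (Mb 0 u * Mb b (y - x - u)) \<partial>lborel) \<partial>lborel)"
    by (subst lborel_pair.Fubini') (auto simp: case_prod_unfold cong: measurable_cong_sets)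
  also have "\<dots> = (\<integral>\<^sup>+u. ennreal (Mb 0 u) * (\<integral>\<^sup>+x. ennreal (Mb a x * Mb b (y - u - x)) \<partial>lborel) \<partial>lborel)"
  proof (intro nn_integral_cong)
    fix u :: real
    have "(\<integral>\<^sup>+x. ennreal (Mb a x) * ennreal (Mb 0 u * Mb b (y - x - u)) \<partial>lborel)
        = (\<integral>\<^sup>+x. ennreal (Mb 0 u) * ennreal (Mb a x * Mb b (y - u - x)) \<partial>lborel)"
      by (intro nn_integral_cong) (simp add: ennreal_mult'[symmetric] Mb_nonneg algebra_simps)
    also have "\<dots> = ennreal (Mb 0 u) * (\<integral>\<^sup>+x. ennreal (Mb a x * Mb b (y - u - x)) \<partial>lborel)"
      by (rule nn_integral_cmult) measurable
    finally show "(\<integral>\<^sup>+x. ennreal (Mb a x) * ennreal (Mb 0 u * Mb b (y - x - u)) \<partial>lborel)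
        = ennreal (Mb 0 u) * (\<integral>\<^sup>+x. ennreal (Mb a x * Mb b (y - u - x)) \<partial>lborel)" .
  qed
  also have "\<dots> = (\<integral>\<^sup>+u. ennreal (Mb 0 u * Mb (Suc (a + b)) (y - u)) \<partial>lborel)"
    by (intro nn_integral_cong, subst Suc.IH, simp only: ennreal_mult'[OF Mb_nonneg])
  also have "\<dots> = ennreal (Mb (Suc (Suc (a + b))) y)"
    by (rule nn_window2)
  finally show ?case by simp
qed

lemma conv_has: "((\<lambda>x. Mb a x * Mb b (y - x)) has_integral Mb (Suc (a + b)) y) UNIV"
  by (rule nn_integral_has_integral[OF _ _ conv_nn]) (auto intro: mult_nonneg_nonneg Mb_nonneg)


definition dif :: "(real \<Rightarrow> real) \<Rightarrow> real \<Rightarrow> real" where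
  "dif f t = f t - f (t - 1)"

lemma difpow_Suc: "(dif ^^ Suc k) g t = (dif ^^ k) g t - (dif ^^ k) g (t - 1)"
  by (simp add: dif_def)

lemma difpow_Suc_right: "(dif ^^ Suc k) g = (dif ^^ k) (dif g)"
  by (simp only: funpow_Suc_right o_def)

lemma dif_deriv:
  assumes "\<And>j. j \<le> k \<Longrightarrow> (g has_real_derivative g' (t - real j)) (at (t - real j))"
  shows "((dif ^^ k) g has_real_derivative (dif ^^ k) g' t) (at t)"
  using assms
proof (induction k arbitrary: t)
  case 0
  then show ?case using "0.prems"[of 0] by simp
next
  case (Suc k)
  have d1: "((dif ^^ k) g has_real_derivative (dif ^^ k) g' t) (at t)"
    by (rule Suc.IH) (use Suc.prems in auto)
  have d2': "((dif ^^ k) g has_real_derivative (dif ^^ k) g' (t - 1)) (at (t - 1))"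
  proof (rule Suc.IH)
    fix j assume "j \<le> k"
    then have "Suc j \<le> Suc k" by simp
    from Suc.prems[OF this] show "(g has_real_derivative g' (t - 1 - real j)) (at (t - 1 - real j))"
      by (simp add: algebra_simps)
  qed
  have d2: "((\<lambda>x. (dif ^^ k) g (x - 1)) has_real_derivative (dif ^^ k) g' (t - 1)) (at t)"
    using d2' DERIV_shift[of "(dif ^^ k) g" _ t "-1"] by simp
  have fe: "(dif ^^ Suc k) g = (\<lambda>x. (dif ^^ k) g x - (dif ^^ k) g (x - 1))"
    by (rule ext) (rule difpow_Suc)
  show ?case unfolding fe difpow_Suc[of k g' t] by (intro derivative_intros d1 d2)
qed

lemma nonint_minus_nat: "(t::real) \<notin> \<int> \<Longrightarrow> t - real j \<notin> \<int>"
  by (metis Ints_of_nat Ints_add diff_add_cancel)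

lemma dM_deriv:
  assumes "m \<ge> 1 \<or> t \<notin> \<int>"
  shows "((dif ^^ k) (Mb (Suc m)) has_real_derivative (dif ^^ Suc k) (Mb m) t) (at t)"
proof -
  have "((dif ^^ k) (Mb (Suc m)) has_real_derivative (dif ^^ k) (dif (Mb m)) t) (at t)"
  proof (rule dif_deriv)
    fix j assume "j \<le> k"
    have "m \<ge> 1 \<or> t - real j \<notin> \<int>" using assms nonint_minus_nat by blast
    from Mb_deriv_gen[OF this] show "(Mb (Suc m) has_real_derivative dif (Mb m) (t - real j)) (at (t - real j))"
      by (simp add: dif_def)
  qed
  then show ?thesis by (simp only: difpow_Suc_right)
qed

lemma GD: "k < Q \<Longrightarrow> (deriv ^^ k) (Mb Q) = (dif ^^ k) (Mb (Q - k))"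
proof (induction k)
  case 0 then show ?case by simp
next
  case (Suc k)
  then obtain m where m: "Q - k = Suc m" "m \<ge> 1" by (cases "Q - k") auto
  have "(deriv ^^ Suc k) (Mb Q) = deriv ((dif ^^ k) (Mb (Suc m)))"
    using Suc by (simp add: m)
  also have "\<dots> = (dif ^^ Suc k) (Mb m)"
    by (rule ext, rule DERIV_imp_deriv, rule dM_deriv) (use m in auto)
  also have "m = Q - Suc k" using m by simp
  finally show ?case .
qed

lemma chain_lin:
  assumes "(f has_real_derivative D) (at (s * x + b))"
  shows "((\<lambda>x. f (s * x + b)) has_real_derivative s * D) (at x)"
proof -
  have "((\<lambda>x. s * x + b) has_real_derivative s) (at x)"
    by (rule derivative_eq_intros refl | simp)+
  from DERIV_chain2[OF assms this] show ?thesis by (simp add: mult.commute)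
qed


context
  fixes p :: nat and s :: real and T :: "'i set" and w b1 b2 :: "'i \<Rightarrow> real"
  assumes finT: "finite T"
begin

definition Phi :: "real \<Rightarrow> real" where
  "Phi x = (\<Sum>m\<in>T. w m * (Mb p (s * x + b1 m) - Mb p (s * x + b2 m)))"

definition PhiD :: "nat \<Rightarrow> real \<Rightarrow> real" where
  "PhiD k x = s ^ k * (\<Sum>m\<in>T. w m * ((dif ^^ k) (Mb (p - k)) (s * x + b1 m) - (dif ^^ k) (Mb (p - k)) (s * x + b2 m)))"

lemma sum_fact: "(\<Sum>m\<in>T. w m * (s * A m - s * B m)) = s * (\<Sum>m\<in>T. w m * (A m - B m))"
proof -
  have "(\<Sum>m\<in>T. w m * (s * A m - s * B m)) = (\<Sum>m\<in>T. s * (w m * (A m - B m)))"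
    by (rule sum.cong) (simp_all add: algebra_simps)
  then show ?thesis by (simp only: sum_distrib_left)
qed

lemma PhiD_deriv:
  assumes "Suc k \<le> p" "Suc k < p \<or> (\<forall>m\<in>T. s * x + b1 m \<notin> \<int> \<and> s * x + b2 m \<notin> \<int>)"
  shows "(PhiD k has_real_derivative PhiD (Suc k) x) (at x)"
proof -
  obtain m0 where m0: "p - k = Suc m0" using assms(1) by (cases "p - k") auto
  have m0': "p - Suc k = m0" using m0 by simp
  have dd: "((\<lambda>x. (dif ^^ k) (Mb (p - k)) (s * x + bb)) has_real_derivative
              s * (dif ^^ Suc k) (Mb (p - Suc k)) (s * x + bb)) (at x)"
    if "Suc k < p \<or> s * x + bb \<notin> \<int>" for bb
    unfolding m0 m0' by (rule chain_lin, rule dM_deriv) (use that m0 in auto)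
  have fk: "PhiD k = (\<lambda>x. s ^ k * (\<Sum>m\<in>T. w m * ((dif ^^ k) (Mb (p - k)) (s * x + b1 m) - (dif ^^ k) (Mb (p - k)) (s * x + b2 m))))"
    by (rule ext) (simp only: PhiD_def)
  have D: "(PhiD k has_real_derivative s ^ k * (\<Sum>m\<in>T. w m * (s * (dif ^^ Suc k) (Mb (p - Suc k)) (s * x + b1 m)
          - s * (dif ^^ Suc k) (Mb (p - Suc k)) (s * x + b2 m)))) (at x)"
    unfolding fk
  proof (rule DERIV_cmult, rule DERIV_sum, rule DERIV_cmult, rule DERIV_diff)
    fix m assume mT: "m \<in> T"
    show "((\<lambda>x. (dif ^^ k) (Mb (p - k)) (s * x + b1 m)) has_real_derivative
              s * (dif ^^ Suc k) (Mb (p - Suc k)) (s * x + b1 m)) (at x)"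
      by (rule dd) (use assms(2) mT in blast)
    show "((\<lambda>x. (dif ^^ k) (Mb (p - k)) (s * x + b2 m)) has_real_derivative
              s * (dif ^^ Suc k) (Mb (p - Suc k)) (s * x + b2 m)) (at x)"
      by (rule dd) (use assms(2) mT in blast)
  qed
  have eq: "s ^ k * (\<Sum>m\<in>T. w m * (s * (dif ^^ Suc k) (Mb (p - Suc k)) (s * x + b1 m)
          - s * (dif ^^ Suc k) (Mb (p - Suc k)) (s * x + b2 m))) = PhiD (Suc k) x"
    unfolding PhiD_def sum_fact by (simp only: power_Suc mult_ac)
  from D show ?thesis by (simp only: eq)
qed

lemma Phi_global: "k < p \<Longrightarrow> (deriv ^^ k) Phi = PhiD k"
proof (induction k)
  case 0 then show ?case by (simp add: PhiD_def[abs_def] Phi_def[abs_def])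
next
  case (Suc k)
  have "(deriv ^^ Suc k) Phi = deriv (PhiD k)" using Suc by simp
  also have "\<dots> = PhiD (Suc k)"
    by (rule ext, rule DERIV_imp_deriv, rule PhiD_deriv) (use Suc.prems in auto)
  finally show ?case .
qed

lemma Phi_deriv:
  assumes "k \<le> p" "\<forall>m\<in>T. s * x + b1 m \<notin> \<int> \<and> s * x + b2 m \<notin> \<int>"
  shows "(deriv ^^ k) Phi x = PhiD k x"
proof (cases "k < p")
  case True then show ?thesis using Phi_global by simp
next
  case False
  then have kp: "k = p" using assms(1) by simp
  show ?thesis
  proof (cases p)
    case 0
    show ?thesis unfolding PhiD_def Phi_def using kp 0 by simp
  next
    case (Suc p')
    have "(deriv ^^ k) Phi x = deriv ((deriv ^^ p') Phi) x"
      by (simp only: kp Suc funpow.simps(2) o_apply)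
    also have "(deriv ^^ p') Phi = PhiD p'" by (rule Phi_global) (simp add: Suc)
    also have "deriv (PhiD p') x = PhiD (Suc p') x"
      by (rule DERIV_imp_deriv, rule PhiD_deriv) (use assms Suc in auto)
    finally show ?thesis by (simp add: kp Suc)
  qed
qed

end


definition nice :: "(real \<Rightarrow> real) \<Rightarrow> bool" where
  "nice f \<longleftrightarrow> f \<in> borel_measurable borel \<and> (\<exists>B. \<forall>x. \<bar>f x\<bar> \<le> B) \<and> (\<exists>R. \<forall>x. R < \<bar>x\<bar> \<longrightarrow> f x = 0)"

lemma niceI:
  assumes "f \<in> borel_measurable borel" "\<And>x. \<bar>f x\<bar> \<le> B" "\<And>x. R < \<bar>x\<bar> \<Longrightarrow> f x = 0"
  shows "nice f"
  using assms unfolding nice_def by blast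

lemma niceE:
  assumes "nice f"
  obtains B R where "f \<in> borel_measurable borel" "\<And>x. \<bar>f x\<bar> \<le> B" "\<And>x. R < \<bar>x\<bar> \<Longrightarrow> f x = 0" "0 \<le> R"
proof -
  from assms obtain B R where h: "f \<in> borel_measurable borel" "\<And>x. \<bar>f x\<bar> \<le> B" "\<And>x. R < \<bar>x\<bar> \<Longrightarrow> f x = 0"
    unfolding nice_def by blast
  show ?thesis by (rule that[of B "max R 0"]) (use h in auto)
qed

lemma nice_Mb: "nice (Mb q)"
  by (rule niceI[of _ "4 ^ q" "real q + 1"]) (auto intro: Mb_abs_bound Mb_supp)

lemma nice_shift: "nice f \<Longrightarrow> nice (\<lambda>x. f (x + c))"
proof -
  assume "nice f"
  then obtain B R where h: "f \<in> borel_measurable borel" "\<And>x. \<bar>f x\<bar> \<le> B" "\<And>x. R < \<bar>x\<bar> \<Longrightarrow> f x = 0"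
    by (metis niceE)
  show ?thesis
  proof (rule niceI[of _ B "R + \<bar>c\<bar>"])
    show "(\<lambda>x. f (x + c)) \<in> borel_measurable borel" using h(1) by measurable
    show "\<bar>f (x + c)\<bar> \<le> B" for x by (rule h(2))
    show "f (x + c) = 0" if "R + \<bar>c\<bar> < \<bar>x\<bar>" for x by (rule h(3)) (use that in arith)
  qed
qed

lemma nice_reflect: "nice f \<Longrightarrow> nice (\<lambda>x. f (c - x))"
proof -
  assume "nice f"
  then obtain B R where h: "f \<in> borel_measurable borel" "\<And>x. \<bar>f x\<bar> \<le> B" "\<And>x. R < \<bar>x\<bar> \<Longrightarrow> f x = 0"
    by (metis niceE)
  show ?thesis
  proof (rule niceI[of _ B "R + \<bar>c\<bar>"])
    show "(\<lambda>x. f (c - x)) \<in> borel_measurable borel" using h(1) by measurable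
    show "\<bar>f (c - x)\<bar> \<le> B" for x by (rule h(2))
    show "f (c - x) = 0" if "R + \<bar>c\<bar> < \<bar>x\<bar>" for x by (rule h(3)) (use that in arith)
  qed
qed

lemma nice_mult: "nice f \<Longrightarrow> nice g \<Longrightarrow> nice (\<lambda>x. f x * g x)"
proof -
  assume "nice f" "nice g"
  then obtain B R B' R' where h: "f \<in> borel_measurable borel" "\<And>x. \<bar>f x\<bar> \<le> B" "\<And>x. R < \<bar>x\<bar> \<Longrightarrow> f x = 0"
    and h': "g \<in> borel_measurable borel" "\<And>x. \<bar>g x\<bar> \<le> B'" "\<And>x. R' < \<bar>x\<bar> \<Longrightarrow> g x = 0"
    by (metis niceE)
  show ?thesis
  proof (rule niceI[of _ "B * B'" R])
    show "(\<lambda>x. f x * g x) \<in> borel_measurable borel" using h(1) h'(1) by measurable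
    show "\<bar>f x * g x\<bar> \<le> B * B'" for x
    proof -
      have a: "\<bar>f x\<bar> \<le> B" "\<bar>g x\<bar> \<le> B'" by (rule h(2), rule h'(2))
      have "0 \<le> B" using a(1) abs_ge_zero[of "f x"] by linarith
      then show ?thesis using a by (simp add: abs_mult mult_mono)
    qed
    show "f x * g x = 0" if "R < \<bar>x\<bar>" for x using h(3)[OF that] by simp
  qed
qed

lemma nice_add: "nice f \<Longrightarrow> nice g \<Longrightarrow> nice (\<lambda>x. f x + g x)"
proof -
  assume "nice f" "nice g"
  then obtain B R B' R' where h: "f \<in> borel_measurable borel" "\<And>x. \<bar>f x\<bar> \<le> B" "\<And>x. R < \<bar>x\<bar> \<Longrightarrow> f x = 0"
    and h': "g \<in> borel_measurable borel" "\<And>x. \<bar>g x\<bar> \<le> B'" "\<And>x. R' < \<bar>x\<bar> \<Longrightarrow> g x = 0"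
    by (metis niceE)
  show ?thesis
  proof (rule niceI[of _ "B + B'" "max R R'"])
    show "(\<lambda>x. f x + g x) \<in> borel_measurable borel" using h(1) h'(1) by measurable
    show "\<bar>f x + g x\<bar> \<le> B + B'" for x
      using h(2)[of x] h'(2)[of x] by arith
    show "f x + g x = 0" if "max R R' < \<bar>x\<bar>" for x using h(3) h'(3) that by simp
  qed
qed

lemma nice_cmult: "nice f \<Longrightarrow> nice (\<lambda>x. c * f x)"
proof -
  assume "nice f"
  then obtain B R where h: "f \<in> borel_measurable borel" "\<And>x. \<bar>f x\<bar> \<le> B" "\<And>x. R < \<bar>x\<bar> \<Longrightarrow> f x = 0"
    by (metis niceE)
  show ?thesis
  proof (rule niceI[of _ "\<bar>c\<bar> * B" R])
    show "(\<lambda>x. c * f x) \<in> borel_measurable borel" using h(1) by measurable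
    show "\<bar>c * f x\<bar> \<le> \<bar>c\<bar> * B" for x by (simp add: abs_mult mult_left_mono h(2))
    show "c * f x = 0" if "R < \<bar>x\<bar>" for x using h(3)[OF that] by simp
  qed
qed

lemma nice_diff: "nice f \<Longrightarrow> nice g \<Longrightarrow> nice (\<lambda>x. f x - g x)"
  using nice_add[of f "\<lambda>x. (-1) * g x"] nice_cmult[of g "-1"] by simp

lemma nice_difpow: "nice f \<Longrightarrow> nice ((dif ^^ k) f)"
proof (induction k)
  case 0 then show ?case by simp
next
  case (Suc k)
  have "nice (\<lambda>x. (dif ^^ k) f x - (dif ^^ k) f (x + (-1)))"
    by (rule nice_diff[OF Suc.IH[OF Suc.prems] nice_shift[OF Suc.IH[OF Suc.prems]]])
  moreover have "(dif ^^ Suc k) f = (\<lambda>x. (dif ^^ k) f x - (dif ^^ k) f (x + (-1)))"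
    by (rule ext) (simp only: difpow_Suc, simp)
  ultimately show ?case by simp
qed

lemma nice_integrable_ivl: "nice f \<Longrightarrow> f integrable_on {a..b}"
  by (metis bm_integrable niceE)

lemma int_UNIV_ivl:
  fixes f :: "real \<Rightarrow> real"
  assumes "f integrable_on {a..b}" "\<And>x. x \<notin> {a..b} \<Longrightarrow> f x = 0"
  shows "(f has_integral integral {a..b} f) UNIV"
proof -
  have "f = (\<lambda>x. if x \<in> {a..b} then f x else 0)" using assms(2) by auto
  then show ?thesis using assms(1) has_integral_restrict_UNIV[of "{a..b}" f] by (metis has_integral_integral)
qed

lemma nice_integrable: "nice f \<Longrightarrow> f integrable_on UNIV"
proof -
  assume n: "nice f"
  then obtain B R where h: "\<And>x. R < \<bar>x\<bar> \<Longrightarrow> f x = 0" by (metis niceE)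
  show ?thesis using int_UNIV_ivl[OF nice_integrable_ivl[OF n], of "-R" R] h by (force simp: integrable_on_def)
qed

lemma nice_int_ivl:
  assumes "nice f" "\<And>x. x \<notin> {a..b} \<Longrightarrow> f x = 0"
  shows "integral UNIV f = integral {a..b} f"
  using int_UNIV_ivl[OF nice_integrable_ivl[OF assms(1)] assms(2)] by (rule integral_unique)

lemma nice_int_shift:
  assumes "nice f"
  shows "integral UNIV (\<lambda>x. f (x + c)) = integral UNIV f"
proof -
  obtain B R where h: "\<And>x. R < \<bar>x\<bar> \<Longrightarrow> f x = 0" using assms by (metis niceE)
  have i1: "integral UNIV f = integral {-R..R} f" by (rule nice_int_ivl[OF assms]) (use h in auto)
  have i2: "integral UNIV (\<lambda>x. f (x + c)) = integral {-R - c..R - c} (\<lambda>x. f (x + c))"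
    by (rule nice_int_ivl[OF nice_shift[OF assms]]) (use h in auto)
  have "((\<lambda>x. f (x + c)) has_integral integral {-R..R} f) {-R - c..R - c}"
    by (rule has_integral_shift_real_ivl) (use nice_integrable_ivl[OF assms] in blast)
  then show ?thesis using i1 i2 by (simp add: integral_unique)
qed

lemma nice_int_reflect:
  assumes "nice f"
  shows "integral UNIV (\<lambda>x. f (- x)) = integral UNIV f"
proof -
  obtain B R where h: "\<And>x. R < \<bar>x\<bar> \<Longrightarrow> f x = 0" using assms by (metis niceE)
  have i1: "integral UNIV f = integral {-R..R} f" by (rule nice_int_ivl[OF assms]) (use h in auto)
  have i2: "integral UNIV (\<lambda>x. f (- x)) = integral {- R..- (-R)} (\<lambda>x. f (- x))"
    by (rule nice_int_ivl) (use h nice_reflect[OF assms, of 0] in auto)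
  show ?thesis using i1 i2 Henstock_Kurzweil_Integration.integral_reflect_real[of R "-R" f] by simp
qed

lemma nice_int_add:
  "nice f \<Longrightarrow> nice g \<Longrightarrow> integral UNIV (\<lambda>x. f x + g x) = integral UNIV f + integral UNIV g"
  by (rule integral_add) (auto intro: nice_integrable)

lemma nice_int_diff:
  "nice f \<Longrightarrow> nice g \<Longrightarrow> integral UNIV (\<lambda>x. f x - g x) = integral UNIV f - integral UNIV g"
  by (rule integral_diff) (auto intro: nice_integrable)


lemma E_supp: "t < 0 \<or> t > real q + real r + 1 \<Longrightarrow> (dif ^^ r) (Mb q) t = 0"
proof (induction r arbitrary: t)
  case 0 then show ?case by (auto intro: Mb_supp)
next
  case (Suc r)
  have "(dif ^^ r) (Mb q) t = 0" by (rule Suc.IH) (use Suc.prems in auto)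
  moreover have "(dif ^^ r) (Mb q) (t - 1) = 0" by (rule Suc.IH) (use Suc.prems in auto)
  ultimately show ?case by (simp only: difpow_Suc)
qed

lemma E_sym: "(dif ^^ r) (Mb q) (real q + real r + 1 - t) = (-1) ^ r * (dif ^^ r) (Mb q) t"
proof (induction r arbitrary: t)
  case 0 then show ?case using Mb_sym by simp
next
  case (Suc r)
  have e1: "(dif ^^ r) (Mb q) (real q + real (Suc r) + 1 - t) = (-1) ^ r * (dif ^^ r) (Mb q) (t - 1)"
    using Suc.IH[of "t - 1"] by (simp add: algebra_simps)
  have e2: "(dif ^^ r) (Mb q) (real q + real (Suc r) + 1 - t - 1) = (-1) ^ r * (dif ^^ r) (Mb q) t"
    using Suc.IH[of t] by (simp add: algebra_simps)
  show ?case by (simp only: difpow_Suc e1 e2) (simp add: algebra_simps)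
qed

lemma K_zero: "Q \<ge> 1 \<Longrightarrow> t \<le> 0 \<Longrightarrow> (dif ^^ j) (Mb Q) t = 0"
proof (induction j arbitrary: t)
  case 0 then show ?case by (auto intro: Mb_supp1)
next
  case (Suc j)
  then show ?case by (simp only: difpow_Suc)
qed

lemma nice_E: "nice ((dif ^^ r) (Mb q))"
  by (rule nice_difpow[OF nice_Mb])

lemma nice_EE: "nice (\<lambda>y. (dif ^^ r) (Mb q) (y + a) * (dif ^^ r) (Mb q) (y + b))"
  by (rule nice_mult; rule nice_shift[OF nice_E])

lemma B_formula:
  "integral UNIV (\<lambda>y. (dif ^^ r) (Mb q) y * (dif ^^ r) (Mb q) (y + d))
     = (-1) ^ r * (dif ^^ (2 * r)) (Mb (2 * q + 1)) (real q + real r + 1 - d)"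
proof (induction r arbitrary: d)
  case 0
  have h: "((\<lambda>x. Mb q x * Mb q (real q + 1 - d - x)) has_integral Mb (Suc (q + q)) (real q + 1 - d)) UNIV"
    by (rule conv_has)
  have "(\<lambda>x. Mb q x * Mb q (real q + 1 - d - x)) = (\<lambda>y. Mb q y * Mb q (y + d))"
  proof (rule ext)
    fix x
    have "Mb q (real q + 1 - (x + d)) = Mb q (x + d)" by (rule Mb_sym)
    then show "Mb q x * Mb q (real q + 1 - d - x) = Mb q x * Mb q (x + d)" by (simp add: algebra_simps)
  qed
  with h have "integral UNIV (\<lambda>y. Mb q y * Mb q (y + d)) = Mb (Suc (q + q)) (real q + 1 - d)"
    by (simp add: integral_unique)
  then show ?case by (simp add: mult_2)
next
  case (Suc r)
  define E where "E = (dif ^^ r) (Mb q)"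
  have nE: "nice E" unfolding E_def by (rule nice_E)
  define B where "B d = integral UNIV (\<lambda>y. E y * E (y + d))" for d
  have nEE: "nice (\<lambda>y. E (y + a) * E (y + b))" for a b unfolding E_def by (rule nice_EE)
  have nEE0: "nice (\<lambda>y. E y * E (y + b))" for b using nEE[of 0 b] by simp
  have I3: "integral UNIV (\<lambda>y. E (y - 1) * E (y + d)) = B (d + 1)"
  proof -
    have "integral UNIV (\<lambda>x. (\<lambda>z. E z * E (z + (d + 1))) (x + -1)) = B (d + 1)"
      unfolding B_def by (rule nice_int_shift[OF nEE0])
    moreover have "(\<lambda>x. (\<lambda>z. E z * E (z + (d + 1))) (x + -1)) = (\<lambda>y. E (y - 1) * E (y + d))"
      by (rule ext) (simp add: algebra_simps)
    ultimately show ?thesis by simp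
  qed
  have I4: "integral UNIV (\<lambda>y. E (y - 1) * E (y + d - 1)) = B d"
  proof -
    have "integral UNIV (\<lambda>x. (\<lambda>z. E z * E (z + d)) (x + -1)) = B d"
      unfolding B_def by (rule nice_int_shift[OF nEE0])
    moreover have "(\<lambda>x. (\<lambda>z. E z * E (z + d)) (x + -1)) = (\<lambda>y. E (y - 1) * E (y + d - 1))"
      by (rule ext) (simp add: algebra_simps)
    ultimately show ?thesis by simp
  qed
  have I2: "integral UNIV (\<lambda>y. E y * E (y + d - 1)) = B (d - 1)"
    unfolding B_def by (simp add: algebra_simps)
  have n3: "nice (\<lambda>y. E (y - 1) * E (y + d))" using nEE[of "-1" d] by simp
  have n4: "nice (\<lambda>y. E (y - 1) * E (y + d - 1))" using nEE[of "-1" "d - 1"] by (simp add: algebra_simps)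
  have n2: "nice (\<lambda>y. E y * E (y + d - 1))" using nEE0[of "d - 1"] by (simp add: algebra_simps)
  have "(\<lambda>y. (dif ^^ Suc r) (Mb q) y * (dif ^^ Suc r) (Mb q) (y + d))
      = (\<lambda>y. (E y * E (y + d) - E y * E (y + d - 1)) - (E (y - 1) * E (y + d) - E (y - 1) * E (y + d - 1)))"
    by (rule ext) (simp only: difpow_Suc E_def[symmetric], simp add: algebra_simps)
  then have "integral UNIV (\<lambda>y. (dif ^^ Suc r) (Mb q) y * (dif ^^ Suc r) (Mb q) (y + d))
      = (B d - B (d - 1)) - (B (d + 1) - B d)"
    using nEE0[of d] n2 n3 n4 I2 I3 I4
    by (simp add: nice_int_diff nice_diff B_def)
  also have "\<dots> = (-1) ^ Suc r * (dif ^^ (2 * Suc r)) (Mb (2 * q + 1)) (real q + real (Suc r) + 1 - d)"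
  proof -
    define K where "K = (dif ^^ (2 * r)) (Mb (2 * q + 1))"
    define t where "t = real q + real (Suc r) + 1 - d"
    have B1: "B d = (-1) ^ r * K (t - 1)"
      unfolding B_def E_def K_def t_def Suc.IH by (simp add: algebra_simps)
    have B2: "B (d - 1) = (-1) ^ r * K t"
      unfolding B_def E_def K_def t_def Suc.IH by (simp add: algebra_simps)
    have B3: "B (d + 1) = (-1) ^ r * K (t - 1 - 1)"
      unfolding B_def E_def K_def t_def Suc.IH by (simp add: algebra_simps)
    have KK: "(dif ^^ (2 * Suc r)) (Mb (2 * q + 1)) t = (K t - K (t - 1)) - (K (t - 1) - K (t - 1 - 1))"
    proof -
      have "2 * Suc r = Suc (Suc (2 * r))" by simp
      then show ?thesis unfolding K_def by (simp only: difpow_Suc)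
    qed
    show ?thesis unfolding t_def[symmetric] KK B1 B2 B3 by (simp add: algebra_simps)
  qed
  finally show ?case .
qed


locale foldc =
  fixes F :: "real \<Rightarrow> real" and \<epsilon> h :: real
  assumes nF: "nice F" and par: "\<And>z. F (- z) = \<epsilon> * F z" and eps: "\<epsilon> * \<epsilon> = 1"
    and supp: "\<And>z. h < \<bar>z\<bar> \<Longrightarrow> F z = 0"
begin

definition Gam :: "real \<Rightarrow> real" where
  "Gam d = integral UNIV (\<lambda>y. F y * F (y + d))"

lemma nFs: "nice (\<lambda>y. F (y - a))"
  using nice_shift[OF nF, of "-a"] by simp

lemma KGam: "integral UNIV (\<lambda>y. F (y - a) * F (y - b)) = Gam (a - b)"
proof -
  have n: "nice (\<lambda>z. F z * F (z + (a - b)))" by (rule nice_mult[OF nF nice_shift[OF nF]])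
  have "integral UNIV (\<lambda>x. (\<lambda>z. F z * F (z + (a - b))) (x + - a)) = Gam (a - b)"
    unfolding Gam_def by (rule nice_int_shift[OF n])
  moreover have "(\<lambda>x. (\<lambda>z. F z * F (z + (a - b))) (x + - a)) = (\<lambda>y. F (y - a) * F (y - b))"
    by (rule ext) (simp add: algebra_simps)
  ultimately show ?thesis by simp
qed

lemma K4: "integral UNIV (\<lambda>y. (F (y - a1) - F (y - a2)) * (F (y - b1) - F (y - b2)))
  = Gam (a1 - b1) - Gam (a1 - b2) - Gam (a2 - b1) + Gam (a2 - b2)"
proof -
  have e: "(\<lambda>y. (F (y - a1) - F (y - a2)) * (F (y - b1) - F (y - b2)))
     = (\<lambda>y. (F (y - a1) * F (y - b1) - F (y - a1) * F (y - b2)) - (F (y - a2) * F (y - b1) - F (y - a2) * F (y - b2)))"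
    by (rule ext) (simp add: algebra_simps)
  have n: "nice (\<lambda>y. F (y - a) * F (y - b))" for a b by (rule nice_mult[OF nFs nFs])
  show ?thesis unfolding e
    by (simp add: nice_int_diff nice_diff n KGam)
qed

lemma Gam_even: "Gam (- d) = Gam d"
  using KGam[of 0 d] KGam[of d 0] by (simp add: mult.commute)

definition Psi :: "real \<Rightarrow> real \<Rightarrow> real" where
  "Psi a y = F (y - a) - F (y + a)"

lemma nPsi: "nice (Psi a)"
  unfolding Psi_def[abs_def] using nice_diff[OF nFs[of a] nFs[of "-a"]] by simp

lemma Psi_par: "Psi a (- y) = - \<epsilon> * Psi a y"
proof -
  have "F (- y - a) = \<epsilon> * F (y + a)" using par[of "y + a"] by simp
  moreover have "F (- y + a) = \<epsilon> * F (y - a)" using par[of "y - a"] by simp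
  ultimately show ?thesis unfolding Psi_def by (simp add: algebra_simps)
qed

lemma Psi_supp: "h + \<bar>a\<bar> < \<bar>y\<bar> \<Longrightarrow> Psi a y = 0"
  unfolding Psi_def by (subst supp, arith)+ simp

lemma refl_shift:
  fixes g :: "real \<Rightarrow> real"
  assumes "g integrable_on {c - b..c - a}"
  shows "integral {a..b} (\<lambda>y. g (c - y)) = integral {c - b..c - a} g"
proof -
  have "((\<lambda>x. g (x + c)) has_integral integral {c - b..c - a} g) {c - b - c..c - a - c}"
    using has_integral_shift_real_ivl[of g "integral {c - b..c - a} g" "c - b" "c - a" c] assms
    by (simp add: has_integral_integral)
  then have "((\<lambda>x. g (x + c)) has_integral integral {c - b..c - a} g) {- b..- a}" by simp
  from has_integral_reflect_real[THEN iffD2, OF this]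
  have "((\<lambda>x. g (- x + c)) has_integral integral {c - b..c - a} g) {a..b}" by simp
  then show ?thesis by (simp add: integral_unique algebra_simps)
qed

end


context foldc
begin

lemma ee: "\<epsilon> * (\<epsilon> * X) = X"
  by (simp add: mult.assoc[symmetric] eps)

lemma u_eq:
  assumes "0 \<le> h" "h < s + 1/2" "1 \<le> a" "a \<le> s - 1/2" "L = 2 * s" "y \<in> {0..s}"
  shows "Psi a y + Psi (L - a) y = Psi a y + \<epsilon> * Psi a (L - y)"
proof -
  have z1: "F (y + (L - a)) = 0" by (rule supp) (use assms in auto)
  have z2: "F (y - L - a) = 0" by (rule supp) (use assms in auto)
  have p1: "F (L - y - a) = \<epsilon> * F (y - (L - a))" using par[of "y - (L - a)"] by (simp add: algebra_simps)
  have p2: "F (L - y + a) = \<epsilon> * F (y - L - a)" using par[of "y - L - a"] by (simp add: algebra_simps)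
  show ?thesis unfolding Psi_def p1 p2 z1 z2
    by (simp add: right_diff_distrib ee)
qed

lemma fold_main:
  assumes h: "0 \<le> h" "h < s + 1/2" and ij: "1 \<le> i" "i \<le> s - 1/2" "1 \<le> j" "j \<le> s - 1/2"
    and L: "L = 2 * s"
  shows "integral {0..s} (\<lambda>y. (Psi i y + Psi (L - i) y) * (Psi j y + Psi (L - j) y))
    = (Gam (i - j) - Gam (i - - j) - Gam (- i - j) + Gam (- i - - j)) / 2
      + (Gam (i - (L - j)) - Gam (i - (L + j)) - Gam (- i - (L - j)) + Gam (- i - (L + j)))"
proof -
  define f where "f = Psi i"
  define g where "g = Psi j"
  have nf: "nice f" "nice g" unfolding f_def g_def by (rule nPsi)+
  have s0: "0 \<le> s" using ij by simp
  have step1: "integral {0..s} (\<lambda>y. (Psi i y + Psi (L - i) y) * (Psi j y + Psi (L - j) y))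
      = integral {0..s} (\<lambda>y. (f y + \<epsilon> * f (L - y)) * (g y + \<epsilon> * g (L - y)))"
    by (rule integral_cong) (simp add: f_def g_def u_eq[OF h _ _ L] ij)
  define k where "k y = f y * g (L - y)" for y
  have nfg: "nice (\<lambda>y. f y * g y)" by (rule nice_mult[OF nf])
  have nk: "nice k" unfolding k_def[abs_def] by (rule nice_mult[OF nf(1) nice_reflect[OF nf(2)]])
  have nB: "nice (\<lambda>y. f (L - y) * g (L - y))"
    by (rule nice_mult; rule nice_reflect, rule nf)
  have nD: "nice (\<lambda>y. f (L - y) * g y)"
    by (rule nice_mult[OF nice_reflect[OF nf(1)] nf(2)])
  have expand: "(\<lambda>y. (f y + \<epsilon> * f (L - y)) * (g y + \<epsilon> * g (L - y)))
     = (\<lambda>y. (f y * g y + f (L - y) * g (L - y)) + \<epsilon> * (k y + f (L - y) * g y))"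
  proof (rule ext)
    fix y
    have "(f y + \<epsilon> * f (L - y)) * (g y + \<epsilon> * g (L - y))
       = f y * g y + (\<epsilon> * \<epsilon>) * (f (L - y) * g (L - y)) + \<epsilon> * (f y * g (L - y) + f (L - y) * g y)"
      by (simp add: algebra_simps)
    then show "(f y + \<epsilon> * f (L - y)) * (g y + \<epsilon> * g (L - y))
     = (f y * g y + f (L - y) * g (L - y)) + \<epsilon> * (k y + f (L - y) * g y)"
      by (simp add: eps k_def)
  qed
  have ii: "\<And>\<phi>. nice \<phi> \<Longrightarrow> \<phi> integrable_on {0..s}" by (rule nice_integrable_ivl)
  have step2: "integral {0..s} (\<lambda>y. (f y + \<epsilon> * f (L - y)) * (g y + \<epsilon> * g (L - y)))
      = (integral {0..s} (\<lambda>y. f y * g y) + integral {0..s} (\<lambda>y. f (L - y) * g (L - y)))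
        + \<epsilon> * (integral {0..s} k + integral {0..s} (\<lambda>y. f (L - y) * g y))"
    unfolding expand
    by (subst integral_add, (intro ii nice_add nice_cmult nfg nB nk nD)+,
        subst integral_mult_right, subst integral_add, (intro ii nfg nB nk nD)+,
        subst integral_add, (intro ii nfg nB nk nD)+, rule refl)
  have B: "integral {0..s} (\<lambda>y. f (L - y) * g (L - y)) = integral {s..L} (\<lambda>y. f y * g y)"
    using refl_shift[of "\<lambda>y. f y * g y" L s 0] nice_integrable_ivl[OF nfg] L by simp
  have D: "integral {0..s} (\<lambda>y. f (L - y) * g y) = integral {s..L} k"
    using refl_shift[of k L s 0] nice_integrable_ivl[OF nk] L by (simp add: k_def)
  have AB: "integral {0..s} (\<lambda>y. f y * g y) + integral {s..L} (\<lambda>y. f y * g y) = integral {0..L} (\<lambda>y. f y * g y)"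
    by (rule Henstock_Kurzweil_Integration.integral_combine) (use s0 L nice_integrable_ivl[OF nfg] in auto)
  have CD: "integral {0..s} k + integral {s..L} k = integral {0..L} k"
    by (rule Henstock_Kurzweil_Integration.integral_combine) (use s0 L nice_integrable_ivl[OF nk] in auto)
  have fsupp: "f y = 0" if "L < \<bar>y\<bar>" for y
    unfolding f_def by (rule Psi_supp) (use that h ij L in auto)
  have gsupp: "g y = 0" if "L < \<bar>y\<bar>" for y
    unfolding g_def by (rule Psi_supp) (use that h ij L in auto)
  have fgeven: "f (- y) * g (- y) = f y * g y" for y
  proof -
    have "f (- y) * g (- y) = (\<epsilon> * (\<epsilon> * (f y * g y)))"
      unfolding f_def g_def Psi_par by (simp add: algebra_simps)
    then show ?thesis by (simp only: ee)
  qed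
  have U1: "integral UNIV (\<lambda>y. f y * g y) = integral {-L..L} (\<lambda>y. f y * g y)"
    by (rule nice_int_ivl[OF nfg]) (use fsupp in auto)
  have U2: "integral {-L..L} (\<lambda>y. f y * g y) = integral {-L..0} (\<lambda>y. f y * g y) + integral {0..L} (\<lambda>y. f y * g y)"
    by (rule Henstock_Kurzweil_Integration.integral_combine[symmetric]) (use s0 L nice_integrable_ivl[OF nfg] in auto)
  have U3: "integral {-L..0} (\<lambda>y. f y * g y) = integral {0..L} (\<lambda>y. f y * g y)"
  proof -
    have "integral {- L..- 0} (\<lambda>y. (\<lambda>y. f y * g y) (- y)) = integral {0..L} (\<lambda>y. f y * g y)"
      by (rule Henstock_Kurzweil_Integration.integral_reflect_real)
    then show ?thesis by (simp add: fgeven)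
  qed
  have ksupp: "k y = 0" if "y \<notin> {0..L}" for y
  proof (cases "y < 0")
    case True
    then have "g (L - y) = 0" using gsupp[of "L - y"] s0 L by auto
    then show ?thesis by (simp add: k_def)
  next
    case False
    then have "L < y" using that by auto
    then have "f y = 0" using fsupp[of y] s0 L by auto
    then show ?thesis by (simp add: k_def)
  qed
  have Uk: "integral UNIV k = integral {0..L} k" by (rule nice_int_ivl[OF nk ksupp])
  have Ffg: "integral UNIV (\<lambda>y. f y * g y) = Gam (i - j) - Gam (i - - j) - Gam (- i - j) + Gam (- i - - j)"
  proof -
    have "(\<lambda>y. f y * g y) = (\<lambda>y. (F (y - i) - F (y - - i)) * (F (y - j) - F (y - - j)))"
      by (rule ext) (simp add: f_def g_def Psi_def)
    then show ?thesis by (simp only: K4)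
  qed
  have Fk: "integral UNIV k = \<epsilon> * (Gam (i - (L - j)) - Gam (i - (L + j)) - Gam (- i - (L - j)) + Gam (- i - (L + j)))"
  proof -
    have "k = (\<lambda>y. \<epsilon> * ((F (y - i) - F (y - - i)) * (F (y - (L - j)) - F (y - (L + j)))))"
    proof (rule ext)
      fix y
      have p1: "F (L - y - j) = \<epsilon> * F (y - (L - j))" using par[of "y - (L - j)"] by (simp add: algebra_simps)
      have p2: "F (L - y + j) = \<epsilon> * F (y - (L + j))" using par[of "y - (L + j)"] by (simp add: algebra_simps)
      show "k y = \<epsilon> * ((F (y - i) - F (y - - i)) * (F (y - (L - j)) - F (y - (L + j))))"
        unfolding k_def f_def g_def Psi_def p1 p2 by (simp add: algebra_simps)
    qed
    moreover have "integral UNIV (\<lambda>y. \<epsilon> * ((F (y - i) - F (y - - i)) * (F (y - (L - j)) - F (y - (L + j)))))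
      = \<epsilon> * integral UNIV (\<lambda>y. (F (y - i) - F (y - - i)) * (F (y - (L - j)) - F (y - (L + j))))"
      by (rule integral_mult_right)
    ultimately show ?thesis by (simp only: K4)
  qed
  have "integral {0..s} (\<lambda>y. (Psi i y + Psi (L - i) y) * (Psi j y + Psi (L - j) y))
      = integral {0..L} (\<lambda>y. f y * g y) + \<epsilon> * integral {0..L} k"
    using step1 step2 B D AB CD by simp
  also have "integral {0..L} (\<lambda>y. f y * g y) = integral UNIV (\<lambda>y. f y * g y) / 2"
    using U1 U2 U3 by simp
  also have "integral {0..L} k = integral UNIV k" using Uk by simp
  finally show ?thesis unfolding Ffg Fk by (simp add: mult.assoc[symmetric] eps)
qed

end


lemma deriv_local:
  assumes "open U" "\<And>x. x \<in> U \<Longrightarrow> f x = g x"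
  shows "x \<in> U \<Longrightarrow> (deriv ^^ k) f x = (deriv ^^ k) g x"
proof (induction k arbitrary: x)
  case 0 then show ?case using assms by simp
next
  case (Suc k)
  have "eventually (\<lambda>y. y \<in> U) (nhds x)" by (rule eventually_nhds_in_open[OF assms(1) Suc.prems])
  then have "eventually (\<lambda>y. (deriv ^^ k) f y = (deriv ^^ k) g y) (nhds x)"
    by (rule eventually_mono) (rule Suc.IH)
  then have "deriv ((deriv ^^ k) f) x = deriv ((deriv ^^ k) g) x"
    by (rule deriv_cong_ev) simp
  then show ?case by simp
qed

lemma countable_negligible: "countable (S :: real set) \<Longrightarrow> negligible S"
proof -
  assume "countable S"
  then have "negligible (\<Union>((\<lambda>x. {x}) ` S))"
    by (intro negligible_countable_Union) auto
  then show ?thesis by simp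
qed

lemma image_div_ivl: "s > 0 \<Longrightarrow> (\<lambda>x. x / s) ` {0..s} = {0..1::real}"
proof -
  assume s: "s > 0"
  show ?thesis
  proof
    show "(\<lambda>x. x / s) ` {0..s} \<subseteq> {0..1}" using s by auto
    show "{0..1} \<subseteq> (\<lambda>x. x / s) ` {0..s}"
    proof
      fix y :: real assume "y \<in> {0..1}"
      then have "s * y \<in> {0..s}" "y = (s * y) / s" using s by (auto simp: mult_le_cancel_left1)
      then show "y \<in> (\<lambda>x. x / s) ` {0..s}" by blast
    qed
  qed
qed


lemma countable_bad:
  assumes "finite T" "s \<noteq> (0::real)"
  shows "countable {x. \<exists>m\<in>T. s * x + b m \<in> \<int>}"
proof -
  have "{x. \<exists>m\<in>T. s * x + b m \<in> \<int>} \<subseteq> (\<Union>m\<in>T. (\<lambda>z. (z - b m) / s) ` \<int>)"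
  proof
    fix x assume "x \<in> {x. \<exists>m\<in>T. s * x + b m \<in> \<int>}"
    then obtain m where m: "m \<in> T" "s * x + b m \<in> \<int>" by blast
    have "x = ((s * x + b m) - b m) / s" using assms(2) by simp
    then show "x \<in> (\<Union>m\<in>T. (\<lambda>z. (z - b m) / s) ` \<int>)" using m by blast
  qed
  moreover have "countable (\<Union>m\<in>T. (\<lambda>z. (z - b m) / s) ` \<int>)"
    using assms(1) by (intro countable_UN countable_image countable_int) (auto intro: countable_finite)
  ultimately show ?thesis by (rule countable_subset)
qed

definition Tm :: "int set" where "Tm = {-1, 0, 1}"
definition wm :: "int \<Rightarrow> real" where "wm m = (-1) ^ nat \<bar>m\<bar>"
definition bb1 :: "nat \<Rightarrow> nat \<Rightarrow> nat \<Rightarrow> int \<Rightarrow> real" where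
  "bb1 p n i m = (real p + 1) / 2 - (real i + real_of_int m * (2 * real n + 1))"
definition bb2 :: "nat \<Rightarrow> nat \<Rightarrow> nat \<Rightarrow> int \<Rightarrow> real" where
  "bb2 p n i m = (real p + 1) / 2 - (- real i + real_of_int m * (2 * real n + 1))"

lemma finTm: "finite Tm" by (simp add: Tm_def)

lemma mb_eq_Phi:
  assumes p: "p \<ge> 1" and n: "n \<ge> p + 1" and i: "1 \<le> i" "i \<le> n" and x: "x \<in> {-1/2<..<3/2}"
  shows "mixed_basis p n i x = Phi p ((2 * real n + 1) / 2) Tm wm (bb1 p n i) (bb2 p n i) x"
proof -
  define s where "s = (2 * real n + 1) / 2"
  define L where "L = 2 * real n + 1"
  have s0: "s > 0" by (simp add: s_def)
  have sx1': "s * x < s * (3/2)" using x s0 by (intro mult_strict_left_mono) auto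
  have sx2': "s * (-1/2) < s * x" using x s0 by (intro mult_strict_left_mono) auto
  have sx1: "s * x < 3 * real n / 2 + 3 / 4" using sx1' unfolding s_def by (simp add: field_simps)
  have sx2: "s * x > - real n / 2 - 1 / 4" using sx2' unfolding s_def by (simp add: field_simps)
  have pn: "real p + 1 \<le> real n" using n by simp
  have iR: "1 \<le> real i" "real i \<le> real n" using i by auto
  define f where "f m = (-1::real) ^ nat \<bar>m\<bar> *
        (bspline_D p n (real i + real_of_int m * (2 * real n + 1)) x
         - bspline_D p n (- real i + real_of_int m * (2 * real n + 1)) x)" for m :: int
  have zero: "f m = 0" if "m \<notin> Tm" for m
  proof -
    have "m \<ge> 2 \<or> m \<le> -2" using that by (auto simp: Tm_def)
    then have "Mb p (s * x - c + (real p + 1) / 2) = 0"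
      if "c = real i + real_of_int m * L \<or> c = - real i + real_of_int m * L" for c
    proof
      assume m2: "m \<ge> 2"
      have mL: "real_of_int m * L \<ge> 2 * L" by (rule mult_right_mono) (use m2 L_def in auto)
      have "s * x - c + (real p + 1) / 2 < 0"
        by (rule disjE[OF that]) (use mL sx1 pn iR s_def L_def in \<open>simp only: add_divide_distrib; linarith\<close>)+
      then show ?thesis by (intro Mb_supp) simp
    next
      assume m2: "m \<le> -2"
      have mL: "real_of_int m * L \<le> -2 * L" by (rule mult_right_mono) (use m2 L_def in auto)
      have "s * x - c + (real p + 1) / 2 > real p + 1"
        by (rule disjE[OF that]) (use mL sx2 pn iR s_def L_def in \<open>simp only: add_divide_distrib; linarith\<close>)+
      then show ?thesis by (intro Mb_supp) simp
    qed
    note zz = this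
    have z1: "Mb p ((2 * real n + 1) / 2 * x - (real i + real_of_int m * (2 * real n + 1)) + (real p + 1) / 2) = 0"
      using zz[of "real i + real_of_int m * L"] by (simp only: s_def L_def simp_thms)
    have z2: "Mb p ((2 * real n + 1) / 2 * x - (- real i + real_of_int m * (2 * real n + 1)) + (real p + 1) / 2) = 0"
      using zz[of "- real i + real_of_int m * L"] by (simp only: s_def L_def simp_thms)
    show ?thesis unfolding f_def bspline_D_def Mb_N[OF p] z1 z2 by simp
  qed
  have "mixed_basis p n i x = infsum f UNIV" unfolding mixed_basis_def f_def ..
  also have "\<dots> = infsum f Tm" by (rule infsum_cong_neutral) (use zero in auto)
  also have "\<dots> = sum f Tm" using finTm by simp
  also have "\<dots> = Phi p ((2 * real n + 1) / 2) Tm wm (bb1 p n i) (bb2 p n i) x"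
    unfolding Phi_def[OF finTm]
    by (rule sum.cong) (simp_all add: f_def wm_def bb1_def bb2_def bspline_D_def Mb_N[OF p] algebra_simps)
  finally show ?thesis .
qed


lemma deriv_formula:
  assumes p: "p \<ge> 1" and r: "r \<le> p" and n: "n \<ge> p + 1" and i: "1 \<le> i" "i \<le> n" and x: "x \<in> {0..1}"
    and ni: "\<forall>m\<in>Tm. (2 * real n + 1) / 2 * x + bb1 p n i m \<notin> \<int> \<and> (2 * real n + 1) / 2 * x + bb2 p n i m \<notin> \<int>"
  shows "nth_deriv r (mixed_basis p n i) x = ((2 * real n + 1) / 2) ^ r *
     ((dif ^^ r) (Mb (p - r)) ((2 * real n + 1) / 2 * x - real i + (real p + 1) / 2)
      - (dif ^^ r) (Mb (p - r)) ((2 * real n + 1) / 2 * x + real i + (real p + 1) / 2)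
      + (dif ^^ r) (Mb (p - r)) ((2 * real n + 1) / 2 * x - (2 * real n + 1 - real i) + (real p + 1) / 2)
      - (dif ^^ r) (Mb (p - r)) ((2 * real n + 1) / 2 * x + (2 * real n + 1 - real i) + (real p + 1) / 2))"
proof -
  define s where "s = (2 * real n + 1) / 2"
  define E where "E = (dif ^^ r) (Mb (p - r))"
  define U where "U = {-1/2<..<3/2::real}"
  have xU: "x \<in> U" using x by (auto simp: U_def)
  have "nth_deriv r (mixed_basis p n i) x = (deriv ^^ r) (Phi p s Tm wm (bb1 p n i) (bb2 p n i)) x"
    unfolding nth_deriv_def s_def
    by (rule deriv_local[of U]) (use xU in \<open>auto simp: U_def intro: mb_eq_Phi[OF p n i]\<close>)
  also have "\<dots> = PhiD p s Tm wm (bb1 p n i) (bb2 p n i) r x"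
    by (rule Phi_deriv[OF finTm r]) (use ni in \<open>simp add: s_def\<close>)
  also have "\<dots> = s ^ r * (wm (-1) * (E (s * x + bb1 p n i (-1)) - E (s * x + bb2 p n i (-1)))
       + (wm 0 * (E (s * x + bb1 p n i 0) - E (s * x + bb2 p n i 0))
       + wm 1 * (E (s * x + bb1 p n i 1) - E (s * x + bb2 p n i 1))))"
    unfolding PhiD_def[OF finTm] E_def by (simp add: Tm_def)
  also have "\<dots> = s ^ r * (E (s * x - real i + (real p + 1) / 2) - E (s * x + real i + (real p + 1) / 2)
      + E (s * x - (2 * real n + 1 - real i) + (real p + 1) / 2) - E (s * x + (2 * real n + 1 - real i) + (real p + 1) / 2))"
  proof -
    have qr: "real (p - r) + real r = real p" using r by simp
    have z1: "E (s * x + bb1 p n i 1) = 0"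
      unfolding E_def
    proof (rule E_supp, rule disjI1)
      have a: "s * x \<le> s" using x by (simp add: s_def)
      have b: "s * x + bb1 p n i 1 = s * x + real p / 2 + 1 / 2 - real i - (2 * real n + 1)"
        by (simp add: bb1_def add_divide_distrib)
      have c: "s = real n + 1 / 2" "real p + 1 \<le> real n" "1 \<le> real i" using n i by (auto simp: s_def)
      show "s * x + bb1 p n i 1 < 0" unfolding b using a c by linarith
    qed
    have z2: "E (s * x + bb2 p n i (-1)) = 0"
      unfolding E_def
    proof (rule E_supp, rule disjI2)
      have a: "s * x \<ge> 0" using x by (simp add: s_def)
      have b: "s * x + bb2 p n i (-1) = s * x + real p / 2 + 1 / 2 + real i + (2 * real n + 1)"
        by (simp add: bb2_def add_divide_distrib)
      have c: "real p + 1 \<le> real n" "1 \<le> real i" using n i by auto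
      show "s * x + bb2 p n i (-1) > real (p - r) + real r + 1" unfolding qr b using a c by linarith
    qed
    have e1: "E (s * x + bb1 p n i 0) = E (s * x - real i + (real p + 1) / 2)"
      by (rule arg_cong[where f = E]) (simp add: bb1_def)
    have e2: "E (s * x + bb2 p n i 0) = E (s * x + real i + (real p + 1) / 2)"
      by (rule arg_cong[where f = E]) (simp add: bb2_def)
    have e3: "E (s * x + bb2 p n i 1) = E (s * x - (2 * real n + 1 - real i) + (real p + 1) / 2)"
      by (rule arg_cong[where f = E]) (simp add: bb2_def)
    have e4: "E (s * x + bb1 p n i (-1)) = E (s * x + (2 * real n + 1 - real i) + (real p + 1) / 2)"
      by (rule arg_cong[where f = E]) (simp add: bb1_def)
    show ?thesis unfolding z1 z2 e1 e2 e3 e4 by (simp add: wm_def)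
  qed
  finally show ?thesis unfolding s_def E_def .
qed


lemma Gam_val:
  assumes "r \<le> p"
  shows "integral UNIV (\<lambda>y. (dif ^^ r) (Mb (p - r)) (y + h) * (dif ^^ r) (Mb (p - r)) (y + d + h))
     = (-1) ^ r * (dif ^^ (2 * r)) (Mb (2 * (p - r) + 1)) (real p + 1 - d)"
proof -
  define E where "E = (dif ^^ r) (Mb (p - r))"
  have n: "nice (\<lambda>y. E y * E (y + d))" unfolding E_def by (rule nice_mult[OF nice_E nice_shift[OF nice_E]])
  have "integral UNIV (\<lambda>y. (\<lambda>y. E y * E (y + d)) (y + h)) = integral UNIV (\<lambda>y. E y * E (y + d))"
    by (rule nice_int_shift[OF n])
  moreover have "(\<lambda>y. (\<lambda>y. E y * E (y + d)) (y + h)) = (\<lambda>y. E (y + h) * E (y + d + h))"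
    by (rule ext) (simp add: algebra_simps)
  moreover have "integral UNIV (\<lambda>y. E y * E (y + d)) = (-1) ^ r * (dif ^^ (2 * r)) (Mb (2 * (p - r) + 1)) (real p + 1 - d)"
    unfolding E_def B_formula using assms by (simp add: of_nat_diff)
  ultimately show ?thesis unfolding E_def by simp
qed

lemma alpha_val:
  assumes "r \<le> p" "p \<ge> 1"
  shows "alpha_coef p r k = (-1) ^ r * (dif ^^ (2 * r)) (Mb (2 * (p - r) + 1)) (real p + 1 - real k)"
proof (cases "k \<le> p")
  case True
  have "nth_deriv (2 * r) (cardinal_bspline (2 * p + 1)) = (dif ^^ (2 * r)) (Mb (2 * (p - r) + 1))"
  proof -
    have "nth_deriv (2 * r) (cardinal_bspline (2 * p + 1)) = (deriv ^^ (2 * r)) (Mb (2 * p + 1))"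
      unfolding nth_deriv_def using Mb_N[of "2 * p + 1"] by simp
    also have "\<dots> = (dif ^^ (2 * r)) (Mb (2 * p + 1 - 2 * r))" by (rule GD) (use assms in simp)
    also have "2 * p + 1 - 2 * r = 2 * (p - r) + 1" using assms by simp
    finally show ?thesis .
  qed
  then show ?thesis using True unfolding alpha_coef_def by simp
next
  case False
  have "(dif ^^ (2 * r)) (Mb (2 * (p - r) + 1)) (real p + 1 - real k) = 0"
    by (rule K_zero) (use False in auto)
  then show ?thesis using False unfolding alpha_coef_def by simp
qed


lemma main_ij:
  fixes p n r i j :: nat
  assumes p: "p \<ge> 1" and r: "r \<le> p" and n: "n \<ge> p + 1" and i: "1 \<le> i" "i \<le> n" and j: "1 \<le> j" "j \<le> n"
  shows "X_mat p r n i j =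
             ((2 * real n + 1) / 2) powr (2 * real r - 1) *
             (toeplitz_T (alpha_coef p r) i j + hankel_H (alpha_coef p r) n i j)"
proof -
  define s where "s = (2 * real n + 1) / 2"
  define h where "h = (real p + 1) / 2"
  define L where "L = 2 * real n + 1"
  define E where "E = (dif ^^ r) (Mb (p - r))"
  define F where "F z = E (z + h)" for z
  define \<epsilon> :: real where "\<epsilon> = (-1) ^ r"
  have s0: "s > 0" by (simp add: s_def)
  have qr: "real (p - r) + real r + 1 = 2 * h" using r by (simp add: h_def of_nat_diff)
  interpret fc: foldc F \<epsilon> h
  proof
    show "nice F" unfolding F_def[abs_def] E_def by (rule nice_shift[OF nice_E])
    show "F (- z) = \<epsilon> * F z" for z
    proof -
      have "- z + h = real (p - r) + real r + 1 - (z + h)" using qr by simp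
      then show ?thesis unfolding F_def E_def \<epsilon>_def by (simp only: E_sym)
    qed
    show "\<epsilon> * \<epsilon> = 1" unfolding \<epsilon>_def by (simp add: power_mult_distrib[symmetric])
    show "F z = 0" if "h < \<bar>z\<bar>" for z
      unfolding F_def E_def by (rule E_supp) (use that qr in auto)
  qed
  define uu where "uu a y = fc.Psi a y + fc.Psi (L - a) y" for a y
  define N where "N = {x. \<exists>m\<in>Tm. s * x + bb1 p n i m \<in> \<int>} \<union> {x. \<exists>m\<in>Tm. s * x + bb2 p n i m \<in> \<int>}
     \<union> {x. \<exists>m\<in>Tm. s * x + bb1 p n j m \<in> \<int>} \<union> {x. \<exists>m\<in>Tm. s * x + bb2 p n j m \<in> \<int>}"
  have negN: "negligible N"
    unfolding N_def using s0
    by (intro countable_negligible countable_Un countable_bad finTm) auto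
  have pt: "nth_deriv r (mixed_basis p n a) x = s ^ r * uu a (s * x)"
    if a: "1 \<le> a" "a \<le> n" and x: "x \<in> {0..1}"
      and ni: "\<forall>m\<in>Tm. s * x + bb1 p n a m \<notin> \<int> \<and> s * x + bb2 p n a m \<notin> \<int>" for a x
  proof -
    have "nth_deriv r (mixed_basis p n a) x = s ^ r *
     ((dif ^^ r) (Mb (p - r)) (s * x - real a + (real p + 1) / 2)
      - (dif ^^ r) (Mb (p - r)) (s * x + real a + (real p + 1) / 2)
      + (dif ^^ r) (Mb (p - r)) (s * x - (2 * real n + 1 - real a) + (real p + 1) / 2)
      - (dif ^^ r) (Mb (p - r)) (s * x + (2 * real n + 1 - real a) + (real p + 1) / 2))"
      unfolding s_def by (rule deriv_formula[OF p r n a x]) (use ni in \<open>simp add: s_def\<close>)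
    also have "\<dots> = s ^ r * uu a (s * x)"
      unfolding uu_def fc.Psi_def F_def E_def L_def h_def by (simp add: algebra_simps)
    finally show ?thesis .
  qed
  have step1: "X_mat p r n i j = integral {0..1} (\<lambda>x. (s ^ r * s ^ r) * (\<lambda>y. uu i y * uu j y) (s * x))"
    unfolding X_mat_def
  proof (rule integral_spike[OF negN])
    fix x assume x: "x \<in> {0..1} - N"
    have "nth_deriv r (mixed_basis p n i) x = s ^ r * uu i (s * x)"
      by (rule pt[OF i]) (use x in \<open>auto simp: N_def\<close>)
    moreover have "nth_deriv r (mixed_basis p n j) x = s ^ r * uu j (s * x)"
      by (rule pt[OF j]) (use x in \<open>auto simp: N_def\<close>)
    ultimately show "(s ^ r * s ^ r) * (\<lambda>y. uu i y * uu j y) (s * x)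
        = nth_deriv r (mixed_basis p n i) x * nth_deriv r (mixed_basis p n j) x"
      by (simp add: algebra_simps)
  qed
  have nuu: "nice (\<lambda>y. uu i y * uu j y)"
    unfolding uu_def by (intro nice_mult nice_add fc.nPsi)
  have step2: "integral {0..1} (\<lambda>x. (\<lambda>y. uu i y * uu j y) (s * x)) = (1 / s) * integral {0..s} (\<lambda>y. uu i y * uu j y)"
    using integral_stretch_real[of s 0 s "\<lambda>y. uu i y * uu j y"] s0 image_div_ivl[OF s0] by simp
  have step3: "integral {0..s} (\<lambda>y. uu i y * uu j y)
    = (fc.Gam (real i - real j) - fc.Gam (real i - - real j) - fc.Gam (- real i - real j) + fc.Gam (- real i - - real j)) / 2
      + (fc.Gam (real i - (L - real j)) - fc.Gam (real i - (L + real j)) - fc.Gam (- real i - (L - real j)) + fc.Gam (- real i - (L + real j)))"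
    unfolding uu_def
    by (rule fc.fold_main) (use i j n in \<open>auto simp: h_def s_def L_def field_simps\<close>)
  have Gnat: "fc.Gam (real k) = alpha_coef p r k" for k
  proof -
    have "fc.Gam (real k) = integral UNIV (\<lambda>y. (dif ^^ r) (Mb (p - r)) (y + h) * (dif ^^ r) (Mb (p - r)) (y + real k + h))"
      unfolding fc.Gam_def F_def E_def by simp
    also have "\<dots> = alpha_coef p r k" unfolding Gam_val[OF r] alpha_val[OF r p] ..
    finally show ?thesis .
  qed
  have Gneg: "fc.Gam (- real k) = alpha_coef p r k" for k
    using fc.Gam_even Gnat by simp
  have big: "alpha_coef p r k = 0" if "k > p" for k using that by (simp add: alpha_coef_def)
  have g1: "fc.Gam (real i - real j) = toeplitz_T (alpha_coef p r) i j"
  proof (cases "i \<le> j")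
    case True
    then have e: "real i - real j = - real (j - i)" by (simp add: of_nat_diff)
    show ?thesis unfolding e Gneg using True by (simp add: toeplitz_T_def)
  next
    case False
    then have e: "real i - real j = real (i - j)" by (simp add: of_nat_diff)
    show ?thesis unfolding e Gnat using False by (simp add: toeplitz_T_def)
  qed
  have g2: "fc.Gam (- real i - - real j) = toeplitz_T (alpha_coef p r) i j"
    using g1 fc.Gam_even[of "real i - real j"] by (simp add: algebra_simps)
  have g3: "fc.Gam (real i - - real j) = alpha_coef p r (i + j)"
    using Gnat[of "i + j"] by simp
  have g4: "fc.Gam (- real i - real j) = alpha_coef p r (i + j)"
    using Gneg[of "i + j"] by (simp add: algebra_simps)
  have g5: "fc.Gam (real i - (L - real j)) = alpha_coef p r (2 * n + 1 - i - j)"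
  proof -
    have "real i - (L - real j) = - real (2 * n + 1 - i - j)" using i j by (simp add: L_def of_nat_diff)
    then show ?thesis by (simp only: Gneg)
  qed
  have g6: "fc.Gam (real i - (L + real j)) = 0"
  proof -
    have e: "real i - (L + real j) = - real (2 * n + 1 + j - i)" using i j by (simp add: L_def of_nat_diff)
    show ?thesis unfolding e Gneg by (rule big) (use i j n in simp)
  qed
  have g7: "fc.Gam (- real i - (L - real j)) = 0"
  proof -
    have e: "- real i - (L - real j) = - real (2 * n + 1 + i - j)" using i j by (simp add: L_def of_nat_diff)
    show ?thesis unfolding e Gneg by (rule big) (use i j n in simp)
  qed
  have g8: "fc.Gam (- real i - (L + real j)) = 0"
  proof -
    have e: "- real i - (L + real j) = - real (2 * n + 1 + i + j)" using i j by (simp add: L_def)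
    show ?thesis unfolding e Gneg by (rule big) (use i j n in simp)
  qed
  have vals: "integral {0..s} (\<lambda>y. uu i y * uu j y) = toeplitz_T (alpha_coef p r) i j + hankel_H (alpha_coef p r) n i j"
    unfolding step3 g1 g2 g3 g4 g5 g6 g7 g8 hankel_H_def by simp
  have pw: "s powr (2 * real r - 1) = s ^ r * s ^ r * (1 / s)"
  proof -
    have "s powr (2 * real r - 1) = s powr (real (2 * r)) / s powr 1" by (simp add: powr_diff)
    also have "\<dots> = s ^ (2 * r) / s" using powr_realpow[OF s0, of "2 * r"] s0 by simp
    also have "\<dots> = s ^ r * s ^ r * (1 / s)" by (simp add: mult_2 power_add)
    finally show ?thesis .
  qed
  have "X_mat p r n i j = (s ^ r * s ^ r) * integral {0..1} (\<lambda>x. (\<lambda>y. uu i y * uu j y) (s * x))"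
    unfolding step1 by (rule integral_mult_right)
  also have "\<dots> = s powr (2 * real r - 1) * (toeplitz_T (alpha_coef p r) i j + hankel_H (alpha_coef p r) n i j)"
    unfolding step2 vals pw by simp
  finally show ?thesis unfolding s_def .
qed

theorem mainTheorem10:
  fixes p n r :: nat
  assumes "p \<ge> 1" and "n \<ge> 1" and "r \<le> p"
    and "n \<ge> max (p + 1) (p + p div 2)"
  shows "\<forall>i\<in>{1..n}. \<forall>j\<in>{1..n}.
           X_mat p r n i j =
             ((2 * real n + 1) / 2) powr (2 * real r - 1) *
             (toeplitz_T (alpha_coef p r) i j + hankel_H (alpha_coef p r) n i j)"
  using main_ij[OF assms(1) assms(3)] assms(4) by auto


end
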